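(* Let $k\ge2$, let $A=\{a_1,\dots,a_n\}$ be a sorted multiset of positive integers ($a_1\le\dots\le a_n$), and let $p$ be an integer with $1\le p\le n-k+1$. Let $Q=\sum_{i=1}^pa_i$ and $q=\max\{i: a_i\le Q\}$. Then the $k$-SSR$_R$ instance $(A,p)$ has an optimal solution $(S_1,\dots,S_k)$ satisfying: (1) every set $S_i$ containing only elements $j$ with $a_j\le Q$ satisfies $\Sigma(S_i,A)<2Q$; (2) every set $S_i$ containing an element $j$ with $a_j>Q$ is a singleton; (3) if $x\ge0$ denotes the number of singleton sets $\{j\}$ in the solution with $a_j>Q$, then the union of these singleton sets is $\{q+1,q+2,\dots,q+x\}$.
   Context: $[n]=\{1,\dots,n\}$; "elements" of sets are indices in $[n]$. For $S\subseteq[n]$, $\Sigma(S,A)=\sum_{i\in S}a_i$. For pairwise disjoint $S_1,\dots,S_k\subseteq[n]$, $\mathcal{R}(S_1,\dots,S_k,A)=\max_i\Sigma(S_i,A)/\min_i\Sigma(S_i,A)$ if the minimum is positive and $+\infty$ otherwise. The $k$-SSR$_R$ problem: given sorted $A$ and integer $p$ with $1\le p\le n-k+1$, find pairwise disjoint $S_1,\dots,S_k\subseteq[n]$ with $\max(S_1)=p$ and $\max(S_i)>p$ for $1<i\le k$ minimizing $\mathcal{R}(S_1,\dots,S_k,A)$; an optimal solution is a feasible one of minimum ratio. *)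

theory Defs
  imports Complex_Main "HOL-Library.Extended_Real"
begin

text \<open>The instance A = (a_1,...,a_n) is a function a :: nat => nat, used on indices 1..n.
  A k-tuple of sets (S_1,...,S_k) is a function S :: nat => nat set, used on 1..k.\<close>

definition setsum :: "nat set \<Rightarrow> (nat \<Rightarrow> nat) \<Rightarrow> nat" where
  "setsum S a = (\<Sum>i\<in>S. a i)"

definition ratio :: "nat \<Rightarrow> (nat \<Rightarrow> nat set) \<Rightarrow> (nat \<Rightarrow> nat) \<Rightarrow> ereal" where
  "ratio k S a =
     (let mx = Max ((\<lambda>i. setsum (S i) a) ` {1..k});
          mn = Min ((\<lambda>i. setsum (S i) a) ` {1..k})
      in if mn > 0 then ereal (real mx / real mn) else \<infinity>)"

definition feasible :: "nat \<Rightarrow> nat \<Rightarrow> nat \<Rightarrow> (nat \<Rightarrow> nat set) \<Rightarrow> bool" where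
  "feasible n k p S \<longleftrightarrow>
     (\<forall>i\<in>{1..k}. S i \<subseteq> {1..n} \<and> S i \<noteq> {}) \<and>
     (\<forall>i\<in>{1..k}. \<forall>j\<in>{1..k}. i \<noteq> j \<longrightarrow> S i \<inter> S j = {}) \<and>
     Max (S 1) = p \<and>
     (\<forall>i\<in>{2..k}. Max (S i) > p)"

definition optimal :: "nat \<Rightarrow> nat \<Rightarrow> nat \<Rightarrow> (nat \<Rightarrow> nat) \<Rightarrow> (nat \<Rightarrow> nat set) \<Rightarrow> bool" where
  "optimal n k p a S \<longleftrightarrow> feasible n k p S \<and>
     (\<forall>T. feasible n k p T \<longrightarrow> ratio k S a \<le> ratio k T a)"

end

theory Submission
  imports Defs "HOL-Library.FuncSet"
begin

lemma ratio_mono: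
  fixes S T :: "nat \<Rightarrow> nat set" and a :: "nat \<Rightarrow> nat"
  assumes k1: "k \<ge> 1"
    and le: "\<forall>i\<in>{1..k}. setsum (T i) a \<le> setsum (S i) a"
    and ge: "\<forall>i\<in>{1..k}. Min ((\<lambda>i. setsum (S i) a) ` {1..k}) \<le> setsum (T i) a"
    and pos: "Min ((\<lambda>i. setsum (S i) a) ` {1..k}) > 0"
  shows "ratio k T a \<le> ratio k S a"
proof -
  define MS where "MS = Max ((\<lambda>i. setsum (S i) a) ` {1..k})"
  define mS where "mS = Min ((\<lambda>i. setsum (S i) a) ` {1..k})"
  define MT where "MT = Max ((\<lambda>i. setsum (T i) a) ` {1..k})"
  define mT where "mT = Min ((\<lambda>i. setsum (T i) a) ` {1..k})"
  have ne: "{1..k} \<noteq> {}" using k1 by auto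
  have "\<forall>i\<in>{1..k}. setsum (T i) a \<le> MS"
  proof
    fix i assume i: "i \<in> {1..k}"
    have "setsum (S i) a \<le> MS" unfolding MS_def using i by (intro Max_ge) auto
    then show "setsum (T i) a \<le> MS" using le i by (meson order_trans)
  qed
  then have MTS: "MT \<le> MS" unfolding MT_def using ne by simp
  have mST: "mS \<le> mT" unfolding mT_def using ge ne mS_def by simp
  have mSp: "mS > 0" using pos mS_def by simp
  then have mTp: "mT > 0" using mST by simp
  have "real MT / real mT \<le> real MS / real mS"
    using MTS mST mSp by (intro frac_le) auto
  moreover have "ratio k T a = ereal (real MT / real mT)"
    unfolding ratio_def Let_def MT_def[symmetric] mT_def[symmetric] using mTp by simp
  moreover have "ratio k S a = ereal (real MS / real mS)"
    unfolding ratio_def Let_def MS_def[symmetric] mS_def[symmetric] using mSp by simp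
  ultimately show ?thesis by simp
qed

lemma subset_exists:
  fixes a :: "nat \<Rightarrow> nat"
  assumes "finite S" "mx \<in> S" "\<forall>j\<in>S. a j \<le> Q" "Q \<le> setsum S a" "0 < Q"
  shows "\<exists>U\<subseteq>S. mx \<in> U \<and> Q \<le> setsum U a \<and> setsum U a < 2 * Q"
  using assms
proof (induction "card S" arbitrary: S rule: less_induct)
  case less
  show ?case
  proof (cases "setsum S a < 2 * Q")
    case True
    have "S \<subseteq> S \<and> mx \<in> S \<and> Q \<le> setsum S a \<and> setsum S a < 2 * Q"
      using True less.prems(2,4) by simp
    then show ?thesis by blast
  next
    case False
    have "\<exists>y\<in>S. y \<noteq> mx"
    proof (rule ccontr)
      assume "\<not> ?thesis"
      then have "S = {mx}" using less.prems(2) by blast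
      then show False using False less.prems by (simp add: setsum_def)
    qed
    then obtain y where y: "y \<in> S" "y \<noteq> mx" by blast
    have "setsum S a = setsum (S - {y}) a + a y"
      unfolding setsum_def using y less.prems(1) by (simp add: sum.remove)
    moreover have "a y \<le> Q" using less.prems(3) y(1) by blast
    ultimately have Qle: "Q \<le> setsum (S - {y}) a" using False by linarith
    have cl: "card (S - {y}) < card S" using y less.prems(1) by (meson card_Diff1_less)
    have fin: "finite (S - {y})" using less.prems(1) by simp
    have mxin: "mx \<in> S - {y}" using less.prems(2) y(2) by simp
    have all: "\<forall>j\<in>S - {y}. a j \<le> Q" using less.prems(3) by simp
    obtain U where U: "U \<subseteq> S - {y}" "mx \<in> U" "Q \<le> setsum U a" "setsum U a < 2 * Q"
      using less.hyps[OF cl fin mxin all Qle less.prems(5)] by blast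
    then have "U \<subseteq> S" by blast
    then show ?thesis using U by blast
  qed
qed

lemma ratio_restrict: "ratio k (restrict T {1..k}) a = ratio k T a"
proof -
  have "(\<lambda>i. setsum (restrict T {1..k} i) a) ` {1..k} = (\<lambda>i. setsum (T i) a) ` {1..k}"
    by (rule image_cong) auto
  then show ?thesis unfolding ratio_def by simp
qed

lemma exists_opt:
  assumes "feasible n k p S0"
  shows "\<exists>S. optimal n k p a S"
proof -
  define F where "F = {T. feasible n k p T}"
  define V where "V = (\<lambda>T. ratio k T a) ` F"
  have "V \<subseteq> (\<lambda>T. ratio k T a) ` (PiE {1..k} (\<lambda>_. Pow {1..n}))"
  proof
    fix v assume "v \<in> V"
    then obtain T where T: "T \<in> F" "v = ratio k T a" unfolding V_def by auto
    have "restrict T {1..k} \<in> PiE {1..k} (\<lambda>_. Pow {1..n})"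
      using T(1) unfolding F_def feasible_def by auto
    moreover have "v = ratio k (restrict T {1..k}) a" using T ratio_restrict by simp
    ultimately show "v \<in> (\<lambda>T. ratio k T a) ` (PiE {1..k} (\<lambda>_. Pow {1..n}))" by blast
  qed
  moreover have "finite (PiE {1..k} (\<lambda>_. Pow {1..n}))" by (intro finite_PiE) auto
  ultimately have fin: "finite V" by (meson finite_imageI finite_subset)
  have "V \<noteq> {}" using assms unfolding V_def F_def by auto
  then have "Min V \<in> V" using fin by simp
  then obtain S where S: "S \<in> F" "ratio k S a = Min V" unfolding V_def by auto
  have "\<forall>T. feasible n k p T \<longrightarrow> ratio k S a \<le> ratio k T a"
    using S fin unfolding V_def F_def by auto
  then show ?thesis using S unfolding optimal_def F_def by auto
qed

theorem theorem9:
  fixes n k p :: nat and a :: "nat \<Rightarrow> nat"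
  assumes "k \<ge> 2"
    and "\<forall>i\<in>{1..n}. a i > 0"
    and "\<forall>i\<in>{1..n}. \<forall>j\<in>{1..n}. i \<le> j \<longrightarrow> a i \<le> a j"
    and "1 \<le> p" and "p + k \<le> n + 1"
  shows "let Q = (\<Sum>i=1..p. a i);
             q = Max {i\<in>{1..n}. a i \<le> Q}
         in \<exists>S. optimal n k p a S \<and>
              (\<forall>i\<in>{1..k}. (\<forall>j\<in>S i. a j \<le> Q) \<longrightarrow> setsum (S i) a < 2 * Q) \<and>
              (\<forall>i\<in>{1..k}. (\<exists>j\<in>S i. a j > Q) \<longrightarrow> card (S i) = 1) \<and>
              (let X = {i\<in>{1..k}. \<exists>j. S i = {j} \<and> a j > Q}
               in (\<Union>i\<in>X. S i) = {q+1..q + card X})"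
proof -
  note k2 = assms(1) and apos = assms(2) and mono = assms(3) and p1 = assms(4) and pk = assms(5)
  have monoD: "\<And>i j. i \<in> {1..n} \<Longrightarrow> j \<in> {1..n} \<Longrightarrow> i \<le> j \<Longrightarrow> a i \<le> a j"
    using mono by blast
  define Q where "Q = (\<Sum>i=1..p. a i)"
  define q where "q = Max {i\<in>{1..n}. a i \<le> Q}"
  have pn: "p \<le> n" using pk k2 by simp
  have aQ: "a p \<le> Q" unfolding Q_def using p1
    by (intro member_le_sum) auto
  have Qpos: "0 < Q" using aQ apos p1 pn by (meson atLeastAtMost_iff order_less_le_trans)
  have finQ: "finite {i\<in>{1..n}. a i \<le> Q}" by simp
  have pin: "p \<in> {i\<in>{1..n}. a i \<le> Q}" using p1 pn aQ by simp
  have qin: "q \<in> {i\<in>{1..n}. a i \<le> Q}" unfolding q_def using finQ pin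
    by (intro Max_in) auto
  have pq: "p \<le> q" unfolding q_def using finQ pin by simp
  have hq: "\<And>j. j \<in> {1..n} \<Longrightarrow> a j \<le> Q \<longleftrightarrow> j \<le> q"
  proof
    fix j assume "j \<in> {1..n}" "a j \<le> Q"
    then show "j \<le> q" unfolding q_def by (intro Max_ge[OF finQ]) simp
  next
    fix j assume "j \<in> {1..n}" "j \<le> q"
    moreover have "q \<in> {1..n}" "a q \<le> Q" using qin by auto
    ultimately have "a j \<le> a q" using monoD by blast
    then show "a j \<le> Q" using \<open>a q \<le> Q\<close> by simp
  qed
  define S0 where "S0 = (\<lambda>i::nat. if i = 1 then {p} else {p + i - 1})"
  have "feasible n k p S0"
    unfolding feasible_def S0_def using pk p1 by auto
  then obtain S where opt: "optimal n k p a S" using exists_opt by blast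
  then have feas: "feasible n k p S" and best: "\<forall>T. feasible n k p T \<longrightarrow> ratio k S a \<le> ratio k T a"
    unfolding optimal_def by auto
  have Ssub: "\<And>i. i \<in> {1..k} \<Longrightarrow> S i \<subseteq> {1..n}" and Sne: "\<And>i. i \<in> {1..k} \<Longrightarrow> S i \<noteq> {}"
    and Sdisj: "\<And>i j. i \<in> {1..k} \<Longrightarrow> j \<in> {1..k} \<Longrightarrow> i \<noteq> j \<Longrightarrow> S i \<inter> S j = {}"
    and S1: "Max (S 1) = p" and S2: "\<And>i. i \<in> {2..k} \<Longrightarrow> Max (S i) > p"
    using feas unfolding feasible_def by auto
  have Sfin: "\<And>i. i \<in> {1..k} \<Longrightarrow> finite (S i)" using Ssub finite_subset by blast
  have MaxS: "\<And>i. i \<in> {1..k} \<Longrightarrow> Max (S i) \<in> S i" using Sfin Sne by simp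
  have k1: "1 \<in> {1..k}" using k2 by simp
  have S1sub: "S 1 \<subseteq> {1..p}"
  proof
    fix j assume "j \<in> S 1"
    then have "j \<le> p" using S1 Sfin[OF k1] by (metis Max_ge)
    then show "j \<in> {1..p}" using Ssub[OF k1] \<open>j \<in> S 1\<close> by auto
  qed
  have sumS1: "setsum (S 1) a \<le> Q" unfolding setsum_def Q_def
    using S1sub by (intro sum_mono2) auto
  define m0 where "m0 = Min ((\<lambda>i. setsum (S i) a) ` {1..k})"
  have m0le: "\<And>i. i \<in> {1..k} \<Longrightarrow> m0 \<le> setsum (S i) a" unfolding m0_def by simp
  have m0Q: "m0 \<le> Q" using m0le[OF k1] sumS1 by simp
  have m0pos: "m0 > 0"
  proof -
    have "\<forall>i\<in>{1..k}. setsum (S i) a > 0"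
    proof
      fix i assume i: "i \<in> {1..k}"
      have "a (Max (S i)) > 0" using apos MaxS[OF i] Ssub[OF i] by auto
      moreover have "a (Max (S i)) \<le> setsum (S i) a" unfolding setsum_def
        using MaxS[OF i] Sfin[OF i] by (intro member_le_sum) auto
      ultimately show "setsum (S i) a > 0" by simp
    qed
    then show ?thesis unfolding m0_def using k2 by simp
  qed
  define B where "B = {i\<in>{1..k}. \<exists>j\<in>S i. Q < a j}"
  have Bsub: "B \<subseteq> {1..k}" unfolding B_def by auto
  have finB: "finite B" using Bsub finite_subset by blast
  define f where "f = (\<lambda>i. Max (S i))"
  have fB: "\<And>i. i \<in> B \<Longrightarrow> q < f i \<and> f i \<le> n \<and> Q < a (f i)"
  proof -
    fix i assume iB: "i \<in> B"
    then have i: "i \<in> {1..k}" using Bsub by auto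
    obtain j where j: "j \<in> S i" "Q < a j" using iB unfolding B_def by auto
    have "j \<le> f i" unfolding f_def using j Sfin[OF i] by simp
    moreover have fin: "f i \<in> {1..n}" unfolding f_def using MaxS[OF i] Ssub[OF i] by auto
    moreover have "j \<in> {1..n}" using j Ssub[OF i] by auto
    ultimately have "a j \<le> a (f i)" by (intro monoD) auto
    then have "Q < a (f i)" using j by simp
    moreover have "\<not> f i \<le> q" using hq[OF fin] \<open>Q < a (f i)\<close> by linarith
    ultimately show "q < f i \<and> f i \<le> n \<and> Q < a (f i)" using fin by simp
  qed
  have finj: "inj_on f B"
  proof
    fix i i' assume "i \<in> B" "i' \<in> B" "f i = f i'"
    then have ik: "i \<in> {1..k}" "i' \<in> {1..k}" using Bsub by auto
    have "Max (S i) \<in> S i" "Max (S i') \<in> S i'" using MaxS ik by auto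
    then have "Max (S i) \<in> S i \<inter> S i'" using \<open>f i = f i'\<close> unfolding f_def by simp
    then have "i \<in> {1..k}" "i' \<in> {1..k}" "Max (S i) \<in> S i \<inter> S i'" using ik by auto
    then show "i = i'" using Sdisj[of i i'] by auto
  qed
  define r where "r = (\<lambda>i. card {i'\<in>B. f i' \<le> f i})"
  have r1: "\<And>i. i \<in> B \<Longrightarrow> 1 \<le> r i \<and> r i \<le> card B"
  proof -
    fix i assume "i \<in> B"
    then have "{i'\<in>B. f i' \<le> f i} \<noteq> {}" by auto
    then show "1 \<le> r i \<and> r i \<le> card B" unfolding r_def using finB
      by (simp add: Suc_leI card_gt_0_iff card_mono)
  qed
  have rinj: "inj_on r B"
  proof -
    have lt: "r i < r i'" if "i \<in> B" "i' \<in> B" "f i < f i'" for i i'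
    proof -
      have "{i''\<in>B. f i'' \<le> f i} \<subseteq> {i''\<in>B. f i'' \<le> f i'}" using that by auto
      moreover have "i' \<in> {i''\<in>B. f i'' \<le> f i'}" "i' \<notin> {i''\<in>B. f i'' \<le> f i}" using that by auto
      ultimately have "{i''\<in>B. f i'' \<le> f i} \<subset> {i''\<in>B. f i'' \<le> f i'}" by blast
      then show ?thesis unfolding r_def using finB by (intro psubset_card_mono) auto
    qed
    show ?thesis
    proof
      fix i i' assume ii: "i \<in> B" "i' \<in> B" "r i = r i'"
      show "i = i'"
      proof (rule ccontr)
        assume "i \<noteq> i'"
        then have "f i \<noteq> f i'" using finj ii by (meson inj_onD)
        then show False using lt ii by (metis less_irrefl nat_neq_iff)
      qed
    qed
  qed
  have rimg: "r ` B = {1..card B}"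
  proof -
    have "r ` B \<subseteq> {1..card B}" using r1 by auto
    moreover have "card (r ` B) = card {1..card B}" using rinj by (simp add: card_image)
    ultimately show ?thesis by (intro card_subset_eq) auto
  qed
  have rf: "\<And>i. i \<in> B \<Longrightarrow> q + r i \<le> f i"
  proof -
    fix i assume iB: "i \<in> B"
    have "f ` {i'\<in>B. f i' \<le> f i} \<subseteq> {q+1..f i}" using fB by fastforce
    then have "card (f ` {i'\<in>B. f i' \<le> f i}) \<le> f i - q" 
      by (metis card_atLeastAtMost card_mono finite_atLeastAtMost Suc_eq_plus1 diff_Suc_Suc)
    moreover have "card (f ` {i'\<in>B. f i' \<le> f i}) = r i" unfolding r_def
      using finj by (intro card_image) (auto intro: inj_on_subset)
    moreover have "q < f i" using fB[OF iB] by simp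
    ultimately show "q + r i \<le> f i" by linarith
  qed
  define T where "T = (\<lambda>i. if i \<in> B then {q + r i} else if setsum (S i) a < 2 * Q then S i
      else (SOME U. U \<subseteq> S i \<and> Max (S i) \<in> U \<and> Q \<le> setsum U a \<and> setsum U a < 2 * Q))"
  have nB: "\<And>i. i \<in> {1..k} \<Longrightarrow> i \<notin> B \<Longrightarrow> T i \<subseteq> S i \<and> Max (S i) \<in> T i \<and> setsum (T i) a < 2 * Q \<and> m0 \<le> setsum (T i) a"
  proof -
    fix i assume i: "i \<in> {1..k}" and iB: "i \<notin> B"
    show "T i \<subseteq> S i \<and> Max (S i) \<in> T i \<and> setsum (T i) a < 2 * Q \<and> m0 \<le> setsum (T i) a"
    proof (cases "setsum (S i) a < 2 * Q")
      case True
      then show ?thesis using iB MaxS[OF i] m0le[OF i] unfolding T_def by simp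
    next
      case False
      have "\<forall>j\<in>S i. a j \<le> Q" using iB i unfolding B_def by auto
      then have "\<exists>U. U \<subseteq> S i \<and> Max (S i) \<in> U \<and> Q \<le> setsum U a \<and> setsum U a < 2 * Q"
        using subset_exists[OF Sfin[OF i] MaxS[OF i], of a Q] False Qpos by auto
      then have "T i \<subseteq> S i \<and> Max (S i) \<in> T i \<and> Q \<le> setsum (T i) a \<and> setsum (T i) a < 2 * Q"
      proof -
        have "T i = (SOME U. U \<subseteq> S i \<and> Max (S i) \<in> U \<and> Q \<le> setsum U a \<and> setsum U a < 2 * Q)"
          unfolding T_def using iB False by simp
        then show ?thesis using someI_ex[OF \<open>\<exists>U. _\<close>] by simp
      qed
      then show ?thesis using m0Q by auto
    qed
  qed
  have nBQ: "\<And>i j. i \<in> {1..k} \<Longrightarrow> i \<notin> B \<Longrightarrow> j \<in> T i \<Longrightarrow> a j \<le> Q \<and> j \<le> q \<and> j \<in> {1..n}"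
  proof -
    fix i j assume i: "i \<in> {1..k}" "i \<notin> B" "j \<in> T i"
    have jS: "j \<in> S i" using nB[OF i(1,2)] i(3) by auto
    have jn: "j \<in> {1..n}" using Ssub[OF i(1)] jS by auto
    have "a j \<le> Q" using i(1,2) jS unfolding B_def by auto
    then show "a j \<le> Q \<and> j \<le> q \<and> j \<in> {1..n}" using hq[OF jn] jn by simp
  qed
  have TB: "\<And>i. i \<in> B \<Longrightarrow> T i = {q + r i}" unfolding T_def by simp
  have B1: "1 \<notin> B"
  proof
    assume "1 \<in> B"
    then obtain j where j: "j \<in> S 1" "Q < a j" unfolding B_def by auto
    have "j \<le> p" "j \<ge> 1" using j S1sub by auto
    then have "a j \<le> a p" using pn by (intro monoD) auto
    then show False using j aQ by simp
  qed
  have aqr: "\<And>i. i \<in> B \<Longrightarrow> Q < a (q + r i) \<and> a (q + r i) \<le> a (f i) \<and> q + r i \<in> {1..n}"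
  proof -
    fix i assume iB: "i \<in> B"
    have qn: "q + r i \<in> {1..n}" using rf[OF iB] fB[OF iB] r1[OF iB] by auto
    have "\<not> q + r i \<le> q" using r1[OF iB] by simp
    then have "Q < a (q + r i)" using hq[OF qn] by linarith
    moreover have "f i \<in> {1..n}" using fB[OF iB] qn by auto
    then have "a (q + r i) \<le> a (f i)" using monoD[of "q + r i" "f i"] rf[OF iB] qn by blast
    ultimately show "Q < a (q + r i) \<and> a (q + r i) \<le> a (f i) \<and> q + r i \<in> {1..n}"
      using qn by blast
  qed
  have feasT: "feasible n k p T"
    unfolding feasible_def
  proof (intro conjI ballI impI)
    fix i assume i: "i \<in> {1..k}"
    show "T i \<subseteq> {1..n}"
    proof (cases "i \<in> B")
      case True
      then show ?thesis using aqr[OF True] TB[OF True] by simp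
    next
      case False
      then show ?thesis using nB[OF i False] Ssub[OF i] by auto
    qed
    show "T i \<noteq> {}"
    proof (cases "i \<in> B")
      case True
      then show ?thesis using TB[OF True] by simp
    next
      case False
      then show ?thesis using nB[OF i False] by auto
    qed
  next
    fix i j assume i: "i \<in> {1..k}" and j: "j \<in> {1..k}" and ij: "i \<noteq> j"
    show "T i \<inter> T j = {}"
    proof (cases "i \<in> B")
      case iB: True
      show ?thesis
      proof (cases "j \<in> B")
        case True
        have "r i \<noteq> r j" using rinj iB True ij by (auto dest: inj_onD)
        then show ?thesis using TB[OF iB] TB[OF True] by simp
      next
        case False
        have "\<And>x. x \<in> T j \<Longrightarrow> x \<le> q" using nBQ[OF j False] by simp
        moreover have "\<not> q + r i \<le> q" using r1[OF iB] by simp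
        ultimately have "q + r i \<notin> T j" by blast
        then show ?thesis using TB[OF iB] by simp
      qed
    next
      case iB: False
      show ?thesis
      proof (cases "j \<in> B")
        case True
        have "\<And>x. x \<in> T i \<Longrightarrow> x \<le> q" using nBQ[OF i iB] by simp
        moreover have "\<not> q + r j \<le> q" using r1[OF True] by simp
        ultimately have "q + r j \<notin> T i" by blast
        then show ?thesis using TB[OF True] by simp
      next
        case False
        have "T i \<subseteq> S i" "T j \<subseteq> S j" using nB[OF i iB] nB[OF j False] by auto
        then show ?thesis using Sdisj[OF i j ij] by auto
      qed
    qed
  next
    have "T 1 = S 1" using nB[OF k1 B1] unfolding T_def using B1 sumS1 Qpos by simp
    then show "Max (T 1) = p" using S1 by simp
  next
    fix i assume i2: "i \<in> {2..k}"
    then have i: "i \<in> {1..k}" by auto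
    show "Max (T i) > p"
    proof (cases "i \<in> B")
      case True
      then show ?thesis using TB[OF True] r1[OF True] pq by simp
    next
      case False
      have "Max (T i) = Max (S i)"
      proof (rule Max_eqI)
        show "finite (T i)" using nB[OF i False] Sfin[OF i] finite_subset by auto
        show "Max (S i) \<in> T i" using nB[OF i False] by simp
        fix y assume "y \<in> T i"
        then have "y \<in> S i" using nB[OF i False] by auto
        then show "y \<le> Max (S i)" using Sfin[OF i] by simp
      qed
      then show ?thesis using S2[OF i2] by simp
    qed
  qed
  have sums: "\<forall>i\<in>{1..k}. setsum (T i) a \<le> setsum (S i) a \<and> m0 \<le> setsum (T i) a"
  proof
    fix i assume i: "i \<in> {1..k}"
    show "setsum (T i) a \<le> setsum (S i) a \<and> m0 \<le> setsum (T i) a"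
    proof (cases "i \<in> B")
      case True
      have "a (f i) \<le> setsum (S i) a" unfolding setsum_def f_def
        using MaxS[OF i] Sfin[OF i] by (intro member_le_sum) auto
      then show ?thesis using aqr[OF True] TB[OF True] m0Q by (simp add: setsum_def)
    next
      case False
      have "setsum (T i) a \<le> setsum (S i) a" unfolding setsum_def
        using nB[OF i False] Sfin[OF i] by (intro sum_mono2) auto
      then show ?thesis using nB[OF i False] by simp
    qed
  qed
  have "ratio k T a \<le> ratio k S a"
    using sums m0pos k2 unfolding m0_def by (intro ratio_mono) auto
  then have optT: "optimal n k p a T" using feasT best unfolding optimal_def
    by (auto intro: order_trans)
  have c1: "\<forall>i\<in>{1..k}. (\<forall>j\<in>T i. a j \<le> Q) \<longrightarrow> setsum (T i) a < 2 * Q"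
  proof (intro ballI impI)
    fix i assume i: "i \<in> {1..k}" and all: "\<forall>j\<in>T i. a j \<le> Q"
    show "setsum (T i) a < 2 * Q"
    proof (cases "i \<in> B")
      case True
      then show ?thesis using all TB[OF True] aqr[OF True] by simp
    next
      case False
      then show ?thesis using nB[OF i False] by simp
    qed
  qed
  have c2: "\<forall>i\<in>{1..k}. (\<exists>j\<in>T i. a j > Q) \<longrightarrow> card (T i) = 1"
  proof (intro ballI impI)
    fix i assume i: "i \<in> {1..k}" and ex: "\<exists>j\<in>T i. a j > Q"
    show "card (T i) = 1"
    proof (cases "i \<in> B")
      case True
      then show ?thesis using TB[OF True] by simp
    next
      case False
      then show ?thesis using nBQ[OF i False] ex by force
    qed
  qed
  define X where "X = {i\<in>{1..k}. \<exists>j. T i = {j} \<and> a j > Q}"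
  have XB: "X = B"
  proof
    show "X \<subseteq> B"
    proof
      fix i assume "i \<in> X"
      then obtain j where i: "i \<in> {1..k}" "T i = {j}" "a j > Q" unfolding X_def by auto
      show "i \<in> B"
      proof (rule ccontr)
        assume "i \<notin> B"
        then show False using nBQ[OF i(1) _, of j] i by simp
      qed
    qed
    show "B \<subseteq> X"
    proof
      fix i assume iB: "i \<in> B"
      then show "i \<in> X" unfolding X_def using Bsub TB[OF iB] aqr[OF iB] by auto
    qed
  qed
  have "(\<Union>i\<in>X. T i) = (\<Union>i\<in>B. {q + r i})" using XB TB by simp
  also have "\<dots> = (\<lambda>i. q + i) ` (r ` B)" by auto
  also have "\<dots> = {q+1..q + card X}" using rimg XB by (simp add: image_add_atLeastAtMost)
  finally have c3: "(\<Union>i\<in>X. T i) = {q+1..q + card X}" .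
  have "\<exists>S. optimal n k p a S \<and>
              (\<forall>i\<in>{1..k}. (\<forall>j\<in>S i. a j \<le> Q) \<longrightarrow> setsum (S i) a < 2 * Q) \<and>
              (\<forall>i\<in>{1..k}. (\<exists>j\<in>S i. a j > Q) \<longrightarrow> card (S i) = 1) \<and>
              (\<Union>i\<in>{i\<in>{1..k}. \<exists>j. S i = {j} \<and> a j > Q}. S i) = {q+1..q + card {i\<in>{1..k}. \<exists>j. S i = {j} \<and> a j > Q}}"
    using optT c1 c2 c3 unfolding X_def by (intro exI[of _ T]) simp
  then show ?thesis by (simp only: Let_def Q_def q_def)
qed

end
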